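(* Let $\mathbf a_0,\dots,\mathbf a_{n+1}\in Q$ satisfy $|\langle\mathbf a_j,\mathbf a_k\rangle-1|<1$ for all $j,k$. Then $$\sum_{j=0}^{n+1}(-1)^jF(\mathbf a_0,\dots,\widehat{\mathbf a_j},\dots,\mathbf a_{n+1})=0,$$ where the hat denotes omission.
   Context: $\mathbb C^{n+1}$ carries the bilinear form $\langle\mathbf z,\mathbf w\rangle=\sum_{j=0}^nz_jw_j$ and $Q=\{\mathbf z\in\mathbb C^{n+1}:\langle\mathbf z,\mathbf z\rangle=1\}$. Let $\Omega\subset Q^{n+1}$ be the set of $(\mathbf a_0,\dots,\mathbf a_n)$, $\mathbf a_j\in Q$, with $|\langle\mathbf a_j,\mathbf a_k\rangle-1|<1$ for all $j,k$. For $(\mathbf a_0,\dots,\mathbf a_n)\in\Omega$, let $A$ be the $(n+1)\times(n+1)$ matrix with columns $\mathbf a_0,\dots,\mathbf a_n$ and $$F(\mathbf a_0,\dots,\mathbf a_n)=\det A\int_{t_0,\dots,t_n\ge0}\exp\Bigl(-\sum_{j,k=0}^n\langle\mathbf a_j,\mathbf a_k\rangle t_jt_k\Bigr)dt_0\cdots dt_n$$ (this integral converges on $\Omega$ and $F$ is holomorphic there). *)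

theory Defs
  imports "HOL-Analysis.Analysis" "Jordan_Normal_Form.Determinant"
begin

text \<open>Vectors of C^(n+1) are encoded as functions nat => complex, only components 0..n matter.\<close>

definition bf :: "nat \<Rightarrow> (nat \<Rightarrow> complex) \<Rightarrow> (nat \<Rightarrow> complex) \<Rightarrow> complex" where
  "bf n z w = (\<Sum>i\<le>n. z i * w i)"

definition Qset :: "nat \<Rightarrow> (nat \<Rightarrow> complex) set" where
  "Qset n = {z. bf n z z = 1}"

definition Fint :: "nat \<Rightarrow> (nat \<Rightarrow> nat \<Rightarrow> complex) \<Rightarrow> complex" where
  "Fint n a = Determinant.det (mat (Suc n) (Suc n) (\<lambda>(i, j). a j i)) *
     set_lebesgue_integral (PiM {..n} (\<lambda>_. lborel)) (PiE {..n} (\<lambda>_. {0..}))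
       (\<lambda>t. exp (- (\<Sum>j\<le>n. \<Sum>k\<le>n. bf n (a j) (a k) * complex_of_real (t j * t k))))"

definition omit :: "nat \<Rightarrow> (nat \<Rightarrow> 'a) \<Rightarrow> nat \<Rightarrow> 'a" where
  "omit j a = (\<lambda>k. if k < j then a k else a (Suc k))"

end

theory Submission
  imports Defs "HOL-Probability.Sinc_Integral"
begin


interpretation PSF: product_sigma_finite "\<lambda>_::nat. (lborel::real measure)"
  by standard

locale divsetup =
  fixes N :: nat and g :: "nat \<Rightarrow> nat \<Rightarrow> complex" and c :: "nat \<Rightarrow> complex" and m :: real
  assumes gsym: "\<And>k l. g k l = g l k"
    and mpos: "0 < m"
    and mle: "\<And>k l. k \<le> N \<Longrightarrow> l \<le> N \<Longrightarrow> m \<le> Re (g k l)"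
    and ker: "\<And>l. l \<le> N \<Longrightarrow> (\<Sum>j\<le>N. c j * g j l) = 0"
begin

definition Qf :: "(nat \<Rightarrow> real) \<Rightarrow> complex" where
  "Qf t = (\<Sum>k\<le>N. \<Sum>l\<le>N. g k l * complex_of_real (t k * t l))"
definition ff where "ff t = exp (- Qf t)"
definition Pj where "Pj j t = (\<Sum>l\<le>N. g j l * complex_of_real (t l))"
definition df where "df j t = - (2 * Pj j t) * ff t"
definition G where "G = (\<Sum>k\<le>N. \<Sum>l\<le>N. cmod (g k l))"
definition Kc where "Kc = 2 * G * exp (1/m)"
definition Sm :: "(nat \<Rightarrow> real) \<Rightarrow> real" where "Sm t = (\<Sum>k\<le>N. t k)"

lemma ReQ:
  assumes "\<And>k. k \<le> N \<Longrightarrow> 0 \<le> t k"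
  shows "m * (Sm t)^2 \<le> Re (Qf t)"
proof -
  have "(Sm t)^2 = (\<Sum>k\<le>N. \<Sum>l\<le>N. t k * t l)"
    by (simp add: Sm_def power2_eq_square sum_product)
  hence "m * (Sm t)^2 = (\<Sum>k\<le>N. \<Sum>l\<le>N. m * (t k * t l))"
    by (simp add: sum_distrib_left)
  also have "\<dots> \<le> (\<Sum>k\<le>N. \<Sum>l\<le>N. Re (g k l) * (t k * t l))"
    by (intro sum_mono mult_right_mono mle) (auto intro: assms mult_nonneg_nonneg)
  also have "\<dots> = Re (Qf t)"
    by (simp add: Qf_def Re_sum)
  finally show ?thesis .
qed

lemma quad_bound:
  assumes "0 \<le> (s::real)" shows "exp (- m * s^2) \<le> exp (1/m) * exp (- 2 * s)"
proof -
  have "0 \<le> (m * s - 1)^2" by simp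
  hence "0 \<le> (m * s)^2 - 2 * (m * s) + 1" by (simp add: power2_eq_square algebra_simps)
  hence "0 \<le> ((m * s)^2 - 2 * (m * s) + 1) / m" using mpos by simp
  hence "- m * s^2 \<le> 1/m - 2 * s" using mpos by (simp add: field_simps power2_eq_square)
  thus ?thesis by (simp flip: exp_add)
qed

lemma lin_bound:
  assumes "0 \<le> (s::real)" shows "s * exp (- 2 * s) \<le> exp (- s)"
proof -
  have "s \<le> exp s" using exp_ge_add_one_self[of s] by linarith
  hence "s * exp (- 2 * s) \<le> exp s * exp (- 2 * s)" by (simp add: mult_right_mono)
  also have "\<dots> = exp (- s)" by (simp flip: exp_add)
  finally show ?thesis .
qed

lemma Sm_nonneg: assumes "\<And>k. k \<le> N \<Longrightarrow> 0 \<le> t k" shows "0 \<le> Sm t"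
  unfolding Sm_def by (rule sum_nonneg) (simp add: assms)

lemma norm_ff:
  assumes "\<And>k. k \<le> N \<Longrightarrow> 0 \<le> t k"
  shows "norm (ff t) \<le> exp (- m * (Sm t)^2)"
  using ReQ[OF assms] by (simp add: ff_def norm_exp_eq_Re)

lemma norm_ff2:
  assumes "\<And>k. k \<le> N \<Longrightarrow> 0 \<le> t k"
  shows "norm (ff t) \<le> exp (1/m) * exp (- Sm t)"
proof -
  have s: "0 \<le> Sm t" using Sm_nonneg assms by blast
  have "norm (ff t) \<le> exp (- m * (Sm t)^2)" by (rule norm_ff) (rule assms)
  hence "norm (ff t) \<le> exp (1/m) * exp (- 2 * Sm t)"
    using quad_bound[OF s] by linarith
  also have "\<dots> \<le> exp (1/m) * exp (- Sm t)" using s by simp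
  finally show ?thesis .
qed

lemma G_nonneg: "0 \<le> G" by (simp add: G_def sum_nonneg)

lemma norm_Pj:
  assumes "j \<le> N" "\<And>k. k \<le> N \<Longrightarrow> 0 \<le> t k"
  shows "norm (Pj j t) \<le> G * Sm t"
proof -
  have gle: "cmod (g j l) \<le> G" if "l \<le> N" for l
  proof -
    have "cmod (g j l) \<le> (\<Sum>l\<le>N. cmod (g j l))"
      using that by (intro member_le_sum) auto
    also have "\<dots> \<le> G" unfolding G_def
      using assms(1) by (intro member_le_sum) (auto intro: sum_nonneg)
    finally show ?thesis .
  qed
  have "norm (Pj j t) \<le> (\<Sum>l\<le>N. cmod (g j l) * t l)"
    unfolding Pj_def
    by (rule order_trans[OF norm_sum sum_mono]) (simp add: norm_mult assms)
  also have "\<dots> \<le> (\<Sum>l\<le>N. G * t l)"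
    by (intro sum_mono mult_right_mono gle assms(2)) auto
  also have "\<dots> = G * Sm t" by (simp add: Sm_def sum_distrib_left)
  finally show ?thesis .
qed

lemma norm_df:
  assumes "j \<le> N" "\<And>k. k \<le> N \<Longrightarrow> 0 \<le> t k"
  shows "norm (df j t) \<le> Kc * exp (- Sm t)"
proof -
  have s: "0 \<le> Sm t" using Sm_nonneg assms by blast
  have "norm (df j t) = 2 * norm (Pj j t) * norm (ff t)"
    by (simp add: df_def norm_mult)
  also have "\<dots> \<le> 2 * (G * Sm t) * exp (- m * (Sm t)^2)"
    using G_nonneg s by (intro mult_mono norm_Pj norm_ff assms) auto
  also have "\<dots> \<le> 2 * (G * Sm t) * (exp (1/m) * exp (- 2 * Sm t))"
    using G_nonneg s by (intro mult_left_mono quad_bound s) auto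
  also have "\<dots> = 2 * G * exp (1/m) * (Sm t * exp (- 2 * Sm t))" by simp
  also have "\<dots> \<le> 2 * G * exp (1/m) * exp (- Sm t)"
    using G_nonneg s by (intro mult_left_mono lin_bound s) auto
  finally show ?thesis by (simp add: Kc_def)
qed

end



context divsetup begin

lemma sum_delta_r: "j \<le> N \<Longrightarrow> (\<Sum>l\<le>N. f l * (if l = j then y else 0)) = f j * (y::complex)"
proof -
  assume j: "j \<le> N"
  have "(\<Sum>l\<le>N. f l * (if l = j then y else 0)) = (\<Sum>l\<le>N. if l = j then f l * y else 0)"
    by (rule sum.cong) auto
  also have "\<dots> = f j * y" using j by (simp add: sum.delta)
  finally show ?thesis .
qed

lemma Pj_upd:
  assumes j: "j \<le> N"
  shows "Pj j (x(j:=y)) = Pj j (x(j:=0)) + g j j * complex_of_real y"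
proof -
  have e: "complex_of_real ((x(j:=y)) l) = complex_of_real ((x(j:=0)) l) + (if l = j then complex_of_real y else 0)" for l
    by auto
  have "Pj j (x(j:=y)) = (\<Sum>l\<le>N. g j l * complex_of_real ((x(j:=0)) l) + g j l * (if l = j then complex_of_real y else 0))"
    unfolding Pj_def by (intro sum.cong refl) (simp only: e distrib_left)
  also have "\<dots> = Pj j (x(j:=0)) + g j j * complex_of_real y"
    by (simp only: sum.distrib sum_delta_r[OF j] Pj_def)
  finally show ?thesis .
qed

lemma Qf_upd:
  assumes j: "j \<le> N"
  shows "Qf (x(j:=y)) = Qf (x(j:=0)) + 2 * Pj j (x(j:=0)) * complex_of_real y + g j j * (complex_of_real y)^2"
proof -
  define U where "U = (\<lambda>k. complex_of_real ((x(j:=0)) k))"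
  define Y where "Y = (\<lambda>k. if k = j then complex_of_real y else 0)"
  have e: "complex_of_real ((x(j:=y)) l) = U l + Y l" for l
    by (auto simp: U_def Y_def)
  have "Qf (x(j:=y)) = (\<Sum>k\<le>N. \<Sum>l\<le>N. g k l * (U k * U l) + g k l * U k * Y l + g k l * Y k * U l + g k l * Y k * Y l)"
    unfolding Qf_def of_real_mult e by (intro sum.cong refl) (simp add: algebra_simps)
  also have "\<dots> = (\<Sum>k\<le>N. \<Sum>l\<le>N. g k l * (U k * U l)) + (\<Sum>k\<le>N. \<Sum>l\<le>N. g k l * U k * Y l)
      + (\<Sum>k\<le>N. \<Sum>l\<le>N. g k l * Y k * U l) + (\<Sum>k\<le>N. \<Sum>l\<le>N. g k l * Y k * Y l)"
    by (simp only: sum.distrib)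
  also have "(\<Sum>k\<le>N. \<Sum>l\<le>N. g k l * (U k * U l)) = Qf (x(j:=0))"
    by (simp add: Qf_def U_def)
  also have "(\<Sum>k\<le>N. \<Sum>l\<le>N. g k l * U k * Y l) = (\<Sum>k\<le>N. g k j * U k * complex_of_real y)"
    unfolding Y_def by (simp only: sum_delta_r[OF j])
  also have "\<dots> = Pj j (x(j:=0)) * complex_of_real y"
    by (simp add: Pj_def U_def sum_distrib_right sum_distrib_left gsym[of _ j] mult.commute)
  also have "(\<Sum>k\<le>N. \<Sum>l\<le>N. g k l * Y k * U l) = (\<Sum>l\<le>N. \<Sum>k\<le>N. (g k l * U l) * Y k)"
    by (subst sum.swap) (simp add: algebra_simps)
  also have "\<dots> = (\<Sum>l\<le>N. g j l * U l * complex_of_real y)"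
    unfolding Y_def by (simp only: sum_delta_r[OF j])
  also have "\<dots> = Pj j (x(j:=0)) * complex_of_real y"
    by (simp add: Pj_def U_def sum_distrib_right sum_distrib_left mult.commute)
  also have "(\<Sum>k\<le>N. \<Sum>l\<le>N. g k l * Y k * Y l) = (\<Sum>k\<le>N. g k j * Y k * complex_of_real y)"
    unfolding Y_def by (simp only: sum_delta_r[OF j])
  also have "\<dots> = (\<Sum>k\<le>N. (g k j * complex_of_real y) * Y k)"
    by (simp add: algebra_simps)
  also have "\<dots> = g j j * (complex_of_real y)^2"
    unfolding Y_def by (simp only: sum_delta_r[OF j]) (simp add: power2_eq_square)
  finally have eq: "Qf (x(j:=y)) = Qf (x(j:=0)) + Pj j (x(j:=0)) * complex_of_real y + Pj j (x(j:=0)) * complex_of_real y + g j j * (complex_of_real y)^2" .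
  show ?thesis unfolding eq by (simp add: algebra_simps)
qed

lemma Sm_upd_ge:
  assumes j: "j \<le> N" and xnn: "\<And>k. k \<le> N \<Longrightarrow> k \<noteq> j \<Longrightarrow> 0 \<le> x k" and y: "0 \<le> y"
  shows "y \<le> Sm (x(j:=y))" and "\<And>k. k \<le> N \<Longrightarrow> 0 \<le> (x(j:=y)) k"
proof -
  show nn: "\<And>k. k \<le> N \<Longrightarrow> 0 \<le> (x(j:=y)) k" using xnn y by auto
  have "(x(j:=y)) j \<le> Sm (x(j:=y))" unfolding Sm_def
    using j xnn y by (intro member_le_sum) auto
  thus "y \<le> Sm (x(j:=y))" by simp
qed

lemma inner_ftc:
  assumes j: "j \<le> N" and xnn: "\<And>k. k \<le> N \<Longrightarrow> k \<noteq> j \<Longrightarrow> 0 \<le> x k"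
  shows "(\<integral>y. indicator {0..} y *\<^sub>R df j (x(j:=y)) \<partial>lborel) = - ff (x(j:=0))"
proof -
  define A where "A = Qf (x(j:=0))"
  define B where "B = Pj j (x(j:=0))"
  define C where "C = g j j"
  define h where "h = (\<lambda>z::complex. exp (- (A + 2 * B * z + C * z^2)))"
  define F where "F = (\<lambda>y::real. h (complex_of_real y))"
  define f where "f = (\<lambda>y::real. - (2 * (B + C * complex_of_real y)) * F y)"
  have Fe: "ff (x(j:=y)) = F y" for y
    unfolding ff_def F_def h_def A_def B_def C_def Qf_upd[OF j, of x y] by simp
  have fe: "df j (x(j:=y)) = f y" for y
    unfolding df_def f_def Fe B_def C_def Pj_upd[OF j, of x y] by simp
  have F0: "F 0 = ff (x(j:=0))" using Fe[of 0] by simp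
  have deriv: "(F has_vector_derivative f y) (at y)" for y
  proof -
    have "(h has_field_derivative (- (2 * B + C * (2 * complex_of_real y))) * h (complex_of_real y)) (at (complex_of_real y))"
      unfolding h_def by (auto intro!: derivative_eq_intros)
    hence "(F has_vector_derivative (- (2 * B + C * (2 * complex_of_real y))) * h (complex_of_real y)) (at y)"
      unfolding F_def by (rule has_vector_derivative_real_field)
    moreover have "(- (2 * B + C * (2 * complex_of_real y))) * h (complex_of_real y) = f y"
      by (simp add: f_def F_def algebra_simps)
    ultimately show ?thesis by simp
  qed
  have cont: "isCont f y" for y
    unfolding f_def F_def h_def by (intro continuous_intros)
  have contF: "isCont F y" for y
    unfolding F_def h_def by (intro continuous_intros)
  have fbound: "norm (f y) \<le> Kc * exp (- y)" if y: "0 \<le> y" for y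
  proof -
    have "norm (f y) = norm (df j (x(j:=y)))" by (simp add: fe)
    also have "\<dots> \<le> Kc * exp (- Sm (x(j:=y)))"
      by (rule norm_df[OF j]) (rule Sm_upd_ge(2)[OF j xnn y])
    also have "\<dots> \<le> Kc * exp (- y)"
      using Sm_upd_ge(1)[OF j xnn y] G_nonneg by (intro mult_left_mono) (auto simp: Kc_def)
    finally show ?thesis .
  qed
  have Fbound: "norm (F y) \<le> exp (1/m) * exp (- y)" if y: "0 \<le> y" for y
  proof -
    have "norm (F y) = norm (ff (x(j:=y)))" by (simp add: Fe)
    also have "\<dots> \<le> exp (1/m) * exp (- Sm (x(j:=y)))"
      by (rule norm_ff2) (rule Sm_upd_ge(2)[OF j xnn y])
    also have "\<dots> \<le> exp (1/m) * exp (- y)"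
      using Sm_upd_ge(1)[OF j xnn y] by simp
    finally show ?thesis .
  qed
  have fmeas: "f \<in> borel_measurable lborel"
  proof -
    have "continuous_on UNIV f" by (intro continuous_at_imp_continuous_on ballI cont)
    thus ?thesis using borel_measurable_continuous_onI by simp
  qed
  have int_exp: "integrable lborel (\<lambda>y::real. y^0 * exp (-y) * indicator {0<..} y)"
    using has_bochner_integral_I0i_power_exp_m[of 0] by (rule integrable.intros)
  have fint: "set_integrable lborel (einterval (ereal 0) \<infinity>) f"
    unfolding set_integrable_def
  proof (rule Bochner_Integration.integrable_bound)
    show "integrable lborel (\<lambda>y::real. Kc * (y^0 * exp (-y) * indicator {0<..} y))"
      using int_exp by (rule integrable_mult_right)
    show "(\<lambda>y. indicator (einterval (ereal 0) \<infinity>) y *\<^sub>R f y) \<in> borel_measurable lborel"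
      using fmeas by (intro borel_measurable_scaleR borel_measurable_indicator) (auto simp: einterval_def)
    show "AE y in lborel. norm (indicator (einterval (ereal 0) \<infinity>) y *\<^sub>R f y) \<le> norm (Kc * (y^0 * exp (-y) * indicator {0<..} y))"
    proof (rule AE_I2)
      fix y :: real
      have Kc: "0 \<le> Kc" using G_nonneg by (simp add: Kc_def)
      show "norm (indicator (einterval (ereal 0) \<infinity>) y *\<^sub>R f y) \<le> norm (Kc * (y^0 * exp (-y) * indicator {0<..} y))"
        using fbound[of y] Kc by (auto simp: einterval_def indicator_def)
    qed
  qed
  have lim0: "((F \<circ> real_of_ereal) \<longlongrightarrow> F 0) (at_right (ereal 0))"
    unfolding ereal_tendsto_simps1
    using contF[of 0] by (simp add: isCont_def tendsto_mono[OF at_le[OF subset_UNIV]])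
  have limtop: "((F \<circ> real_of_ereal) \<longlongrightarrow> 0) (at_left \<infinity>)"
    unfolding ereal_tendsto_simps1
  proof (rule Lim_null_comparison)
    show "\<forall>\<^sub>F y in at_top. norm (F y) \<le> exp (1/m) * exp (- y)"
      using eventually_ge_at_top[of "0::real"] by eventually_elim (rule Fbound)
    have "((\<lambda>y::real. exp (- y)) \<longlongrightarrow> 0) at_top"
      using filterlim_compose[OF exp_at_bot filterlim_uminus_at_bot_at_top] by simp
    thus "((\<lambda>y::real. exp (1/m) * exp (- y)) \<longlongrightarrow> 0) at_top"
      by (rule tendsto_mult_right_zero)
  qed
  have "(LBINT y=ereal 0..\<infinity>. f y) = 0 - F 0"
    by (rule interval_integral_FTC_integrable[OF _ _ _ fint lim0 limtop])
       (auto intro: deriv cont)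
  hence "(LINT y:{0<..}|lborel. f y) = - F 0"
    by (simp add: interval_integral_to_infinity_eq)
  hence "(\<integral>y. indicator {0<..} y *\<^sub>R f y \<partial>lborel) = - F 0"
    by (simp add: set_lebesgue_integral_def)
  moreover have "(\<integral>y. indicator {0..} y *\<^sub>R df j (x(j:=y)) \<partial>lborel) = (\<integral>y. indicator {0<..} y *\<^sub>R f y \<partial>lborel)"
    using AE_lborel_singleton[of 0]
    by (intro integral_cong_AE) (auto simp: fe indicator_def intro!: borel_measurable_scaleR fmeas[simplified])
  ultimately show ?thesis by (simp add: F0)
qed

end



context divsetup begin

abbreviation PM :: "nat set \<Rightarrow> (nat \<Rightarrow> real) measure" where "PM I \<equiv> PiM I (\<lambda>_::nat. lborel::real measure)"
definition Oc :: "nat set \<Rightarrow> (nat \<Rightarrow> real) set" where "Oc I = PiE I (\<lambda>_. {0..})"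

lemma df_meas: "df j \<in> borel_measurable (PM {..N})"
  unfolding df_def Pj_def ff_def Qf_def by measurable

lemma ff_meas: "ff \<in> borel_measurable (PM {..N})"
  unfolding ff_def Qf_def by measurable

lemma Oc_sets: "finite I \<Longrightarrow> Oc I \<in> sets (PM I)"
  unfolding Oc_def by (intro sets_PiM_I_finite) auto

lemma big_int:
  assumes j: "j \<le> N"
  shows "integrable (PM {..N}) (\<lambda>t. indicator (Oc {..N}) t *\<^sub>R df j t)"
proof (rule Bochner_Integration.integrable_bound)
  have i1: "integrable lborel (\<lambda>y::real. exp (-y) * indicator {0..} y)"
    using integrable.intros[OF has_bochner_integral_I0i_power_exp_m'[of 0]] by simp
  have "integrable (PM {..N}) (\<lambda>t. \<Prod>k\<in>{..N}. (\<lambda>y::real. exp (-y) * indicator {0..} y) (t k))"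
    by (rule PSF.product_integrable_prod) (auto intro: i1)
  thus "integrable (PM {..N}) (\<lambda>t. Kc * (\<Prod>k\<in>{..N}. (\<lambda>y::real. exp (-y) * indicator {0..} y) (t k)))"
    by (rule integrable_mult_right)
  show "(\<lambda>t. indicator (Oc {..N}) t *\<^sub>R df j t) \<in> borel_measurable (PM {..N})"
    by (intro borel_measurable_scaleR borel_measurable_indicator Oc_sets df_meas) auto
  show "AE t in PM {..N}. norm (indicator (Oc {..N}) t *\<^sub>R df j t) \<le>
     norm (Kc * (\<Prod>k\<in>{..N}. (\<lambda>y::real. exp (-y) * indicator {0..} y) (t k)))"
  proof (rule AE_I2)
    fix t assume t: "t \<in> space (PM {..N})"
    have Kc: "0 \<le> Kc" using G_nonneg by (simp add: Kc_def)
    show "norm (indicator (Oc {..N}) t *\<^sub>R df j t) \<le>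
     norm (Kc * (\<Prod>k\<in>{..N}. (\<lambda>y::real. exp (-y) * indicator {0..} y) (t k)))"
    proof (cases "t \<in> Oc {..N}")
      case True
      hence nn: "\<And>k. k \<le> N \<Longrightarrow> 0 \<le> t k" by (auto simp: Oc_def)
      have "norm (indicator (Oc {..N}) t *\<^sub>R df j t) = norm (df j t)" using True by simp
      also have "\<dots> \<le> Kc * exp (- Sm t)" by (rule norm_df[OF j nn])
      also have "exp (- Sm t) = (\<Prod>k\<in>{..N}. exp (- t k))"
        by (simp add: Sm_def exp_sum flip: sum_negf)
      also have "(\<Prod>k\<in>{..N}. exp (- t k)) = (\<Prod>k\<in>{..N}. (\<lambda>y::real. exp (-y) * indicator {0..} y) (t k))"
        using nn by (intro prod.cong) auto
      also have "Kc * \<dots> \<le> norm (Kc * \<dots>)" by simp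
      finally show ?thesis .
    next
      case False
      thus ?thesis by simp
    qed
  qed
qed

lemma stepA:
  assumes j: "j \<le> N"
  shows "(\<integral>t. indicator (Oc {..N}) t *\<^sub>R df j t \<partial>PM {..N})
       = - (\<integral>x. indicator (Oc ({..N}-{j})) x *\<^sub>R ff (x(j:=0)) \<partial>PM ({..N}-{j}))"
proof -
  define J where "J = {..N}-{j}"
  have ins: "{..N} = insert j J" using j by (auto simp: J_def)
  have jJ: "j \<notin> J" "finite J" by (auto simp: J_def)
  have int: "integrable (PM (insert j J)) (\<lambda>t. indicator (Oc {..N}) t *\<^sub>R df j t)"
    using big_int[OF j] ins by simp
  have "(\<integral>t. indicator (Oc {..N}) t *\<^sub>R df j t \<partial>PM {..N})
      = (\<integral>t. indicator (Oc {..N}) t *\<^sub>R df j t \<partial>PM (insert j J))" using ins by simp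
  also have "\<dots> = (\<integral>x. (\<integral>y. indicator (Oc {..N}) (x(j:=y)) *\<^sub>R df j (x(j:=y)) \<partial>lborel) \<partial>PM J)"
    by (rule PSF.product_integral_insert[OF jJ(2) jJ(1) int])
  also have "\<dots> = (\<integral>x. - (indicator (Oc J) x *\<^sub>R ff (x(j:=0))) \<partial>PM J)"
  proof (rule Bochner_Integration.integral_cong[OF refl])
    fix x assume "x \<in> space (PM J)"
    hence xe: "x \<in> PiE J (\<lambda>_. UNIV)" by (simp add: space_PiM)
    show "(\<integral>y. indicator (Oc {..N}) (x(j:=y)) *\<^sub>R df j (x(j:=y)) \<partial>lborel) = - (indicator (Oc J) x *\<^sub>R ff (x(j:=0)))"
    proof (cases "x \<in> Oc J")
      case True
      have xnn: "\<And>k. k \<le> N \<Longrightarrow> k \<noteq> j \<Longrightarrow> 0 \<le> x k" using True by (auto simp: Oc_def J_def)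
      have "indicator (Oc {..N}) (x(j:=y)) = (indicator {0..} y :: real)" for y
        using True xe j by (auto simp: Oc_def indicator_def PiE_def Pi_iff extensional_def J_def)
      then show ?thesis using inner_ftc[OF j xnn] True by simp
    next
      case False
      have "indicator (Oc {..N}) (x(j:=y)) = (0 :: real)" for y
        using False xe j by (auto simp: Oc_def indicator_def PiE_def Pi_iff extensional_def J_def)
      then show ?thesis using False by simp
    qed
  qed
  also have "\<dots> = - (\<integral>x. indicator (Oc J) x *\<^sub>R ff (x(j:=0)) \<partial>PM J)"
    by (rule Bochner_Integration.integral_minus)
  finally show ?thesis by (simp add: J_def)
qed

lemma stepC:
  "(\<Sum>j\<le>N. c j * (\<integral>x. indicator (Oc ({..N}-{j})) x *\<^sub>R ff (x(j:=0)) \<partial>PM ({..N}-{j}))) = 0"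
proof -
  have pt: "(\<Sum>j\<le>N. c j * df j t) = 0" for t
  proof -
    have "(\<Sum>j\<le>N. c j * Pj j t) = (\<Sum>j\<le>N. \<Sum>l\<le>N. c j * g j l * complex_of_real (t l))"
      by (simp add: Pj_def sum_distrib_left mult.assoc)
    also have "\<dots> = (\<Sum>l\<le>N. \<Sum>j\<le>N. c j * g j l * complex_of_real (t l))"
      by (rule sum.swap)
    also have "\<dots> = (\<Sum>l\<le>N. (\<Sum>j\<le>N. c j * g j l) * complex_of_real (t l))"
      by (simp add: sum_distrib_right)
    also have "\<dots> = 0" by (simp add: ker)
    finally have z: "(\<Sum>j\<le>N. c j * Pj j t) = 0" .
    have "(\<Sum>j\<le>N. c j * df j t) = (\<Sum>j\<le>N. (- (2 * ff t)) * (c j * Pj j t))"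
      by (intro sum.cong) (auto simp: df_def algebra_simps)
    also have "\<dots> = (- (2 * ff t)) * (\<Sum>j\<le>N. c j * Pj j t)"
      by (simp add: sum_distrib_left)
    finally show ?thesis using z by simp
  qed
  have "0 = (\<integral>t. (\<Sum>j\<le>N. c j * (indicator (Oc {..N}) t *\<^sub>R df j t)) \<partial>PM {..N})"
  proof -
    have "(\<Sum>j\<le>N. c j * (indicator (Oc {..N}) t *\<^sub>R df j t)) = indicator (Oc {..N}) t *\<^sub>R (\<Sum>j\<le>N. c j * df j t)" for t
      by (simp add: scaleR_sum_right algebra_simps)
    thus ?thesis using pt by simp
  qed
  also have "\<dots> = (\<Sum>j\<le>N. (\<integral>t. c j * (indicator (Oc {..N}) t *\<^sub>R df j t) \<partial>PM {..N}))"
    by (rule Bochner_Integration.integral_sum, rule integrable_mult_right, rule big_int) simp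
  also have "\<dots> = (\<Sum>j\<le>N. c j * (\<integral>t. indicator (Oc {..N}) t *\<^sub>R df j t \<partial>PM {..N}))"
    by (intro sum.cong refl Bochner_Integration.integral_mult_right_zero)
  also have "\<dots> = (\<Sum>j\<le>N. - (c j * (\<integral>x. indicator (Oc ({..N}-{j})) x *\<^sub>R ff (x(j:=0)) \<partial>PM ({..N}-{j}))))"
    by (intro sum.cong refl) (simp add: stepA)
  finally show ?thesis by (simp add: sum_negf)
qed

end



lemma distr_reindex:
  assumes bij: "bij_betw e I J" and fin: "finite I"
  shows "distr (PiM J (\<lambda>_::nat. lborel::real measure)) (PiM I (\<lambda>_::nat. lborel::real measure)) (\<lambda>x. \<lambda>i\<in>I. x (e i))
       = PiM I (\<lambda>_::nat. lborel::real measure)"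
proof (rule PSF.PiM_eqI[OF fin])
  have meas: "(\<lambda>x. \<lambda>i\<in>I. x (e i)) \<in> measurable (PiM J (\<lambda>_::nat. lborel::real measure)) (PiM I (\<lambda>_::nat. lborel::real measure))"
    using bij by (intro measurable_restrict measurable_component_singleton) (auto simp: bij_betw_def)
  show "sets (distr (PiM J (\<lambda>_::nat. lborel::real measure)) (PiM I (\<lambda>_::nat. lborel::real measure)) (\<lambda>x. \<lambda>i\<in>I. x (e i)))
      = sets (PiM I (\<lambda>_::nat. lborel::real measure))" by simp
  fix A assume A: "\<And>i. i \<in> I \<Longrightarrow> A i \<in> sets (lborel::real measure)"
  have finJ: "finite J" using bij fin bij_betw_finite by blast
  have pre: "(\<lambda>x. \<lambda>i\<in>I. x (e i)) -` PiE I A \<inter> space (PiM J (\<lambda>_::nat. lborel::real measure)) = PiE J (\<lambda>k. A (inv_into I e k))"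
  proof (rule Set.set_eqI, rule iffI)
    fix x assume "x \<in> (\<lambda>x. \<lambda>i\<in>I. x (e i)) -` PiE I A \<inter> space (PiM J (\<lambda>_::nat. lborel::real measure))"
    hence x1: "\<And>i. i \<in> I \<Longrightarrow> x (e i) \<in> A i" and x2: "x \<in> extensional J"
      by (auto simp: space_PiM PiE_def Pi_iff)
    show "x \<in> PiE J (\<lambda>k. A (inv_into I e k))"
    proof (rule PiE_I)
      fix k assume k: "k \<in> J"
      have "inv_into I e k \<in> I" using bij k by (metis bij_betw_def inv_into_into)
      moreover have "e (inv_into I e k) = k" using bij k by (meson bij_betw_inv_into_right)
      ultimately show "x k \<in> A (inv_into I e k)" using x1 by metis
    next
      fix k assume "k \<notin> J" thus "x k = undefined" using x2 by (simp add: extensional_def)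
    qed
  next
    fix x assume x: "x \<in> PiE J (\<lambda>k. A (inv_into I e k))"
    have "x (e i) \<in> A i" if i: "i \<in> I" for i
    proof -
      have "e i \<in> J" using bij i by (meson bij_betwE)
      moreover have "inv_into I e (e i) = i" using bij i by (meson bij_betw_inv_into_left)
      ultimately show ?thesis using x by (metis PiE_E)
    qed
    thus "x \<in> (\<lambda>x. \<lambda>i\<in>I. x (e i)) -` PiE I A \<inter> space (PiM J (\<lambda>_::nat. lborel::real measure))"
      using x by (auto simp: space_PiM PiE_def)
  qed
  have "emeasure (distr (PiM J (\<lambda>_::nat. lborel::real measure)) (PiM I (\<lambda>_::nat. lborel::real measure)) (\<lambda>x. \<lambda>i\<in>I. x (e i))) (PiE I A)
     = emeasure (PiM J (\<lambda>_::nat. lborel::real measure)) (PiE J (\<lambda>k. A (inv_into I e k)))"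
    using A fin by (subst emeasure_distr[OF meas]) (auto intro!: sets_PiM_I_finite simp: pre)
  also have "\<dots> = (\<Prod>k\<in>J. emeasure lborel (A (inv_into I e k)))"
  proof (rule PSF.emeasure_PiM[OF finJ])
    fix k assume k: "k \<in> J"
    have "inv_into I e k \<in> I" using bij k by (metis bij_betw_def inv_into_into)
    thus "A (inv_into I e k) \<in> sets lborel" using A by simp
  qed
  also have "\<dots> = (\<Prod>i\<in>I. emeasure lborel (A (inv_into I e (e i))))"
    using prod.reindex_bij_betw[OF bij, of "\<lambda>k. emeasure lborel (A (inv_into I e k))"] by simp
  also have "\<dots> = (\<Prod>i\<in>I. emeasure lborel (A i))"
    using bij by (intro prod.cong refl) (simp add: bij_betw_inv_into_left)
  finally show "emeasure (distr (PiM J (\<lambda>_::nat. lborel::real measure)) (PiM I (\<lambda>_::nat. lborel::real measure)) (\<lambda>x. \<lambda>i\<in>I. x (e i))) (PiE I A)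
     = (\<Prod>i\<in>I. emeasure lborel (A i))" .
qed

lemma integral_reindex:
  fixes f :: "(nat \<Rightarrow> real) \<Rightarrow> complex"
  assumes bij: "bij_betw e I J" and fin: "finite I"
    and f: "f \<in> borel_measurable (PiM I (\<lambda>_::nat. lborel::real measure))"
  shows "integral\<^sup>L (PiM I (\<lambda>_::nat. lborel::real measure)) f
       = (\<integral>x. f (\<lambda>i\<in>I. x (e i)) \<partial>PiM J (\<lambda>_::nat. lborel::real measure))"
proof -
  have meas: "(\<lambda>x. \<lambda>i\<in>I. x (e i)) \<in> measurable (PiM J (\<lambda>_::nat. lborel::real measure)) (PiM I (\<lambda>_::nat. lborel::real measure))"
    using bij by (intro measurable_restrict measurable_component_singleton) (auto simp: bij_betw_def)
  show ?thesis
    by (subst distr_reindex[OF bij fin, symmetric]) (rule integral_distr[OF meas f])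
qed

definition sk :: "nat \<Rightarrow> nat \<Rightarrow> nat" where "sk j i = (if i < j then i else Suc i)"

lemma sk_bij: assumes "j \<le> Suc n" shows "bij_betw (sk j) {..n} ({..Suc n} - {j})"
proof -
  have inj: "inj_on (sk j) {..n}" by (auto simp: inj_on_def sk_def split: if_splits)
  have "sk j ` {..n} \<subseteq> {..Suc n} - {j}" by (auto simp: sk_def)
  moreover have "{..Suc n} - {j} \<subseteq> sk j ` {..n}"
  proof
    fix k assume k: "k \<in> {..Suc n} - {j}"
    show "k \<in> sk j ` {..n}"
    proof (cases "k < j")
      case True
      thus ?thesis using k assms by (intro image_eqI[of _ _ k]) (auto simp: sk_def)
    next
      case False
      hence "j < k" using k by auto
      thus ?thesis using k by (intro image_eqI[of _ _ "k - 1"]) (auto simp: sk_def)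
    qed
  qed
  ultimately show ?thesis using inj by (auto simp: bij_betw_def)
qed

lemma sum_split_sk:
  assumes "j \<le> Suc n"
  shows "(\<Sum>k\<le>Suc n. h k) = h j + (\<Sum>i\<le>n. h (sk j i))"
proof -
  have e: "{..Suc n} = insert j ({..Suc n} - {j})" using assms by auto
  have "(\<Sum>k\<le>Suc n. h k) = sum h (insert j ({..Suc n} - {j}))" by (metis e)
  also have "\<dots> = h j + (\<Sum>k\<in>{..Suc n} - {j}. h k)" by (rule sum.insert) auto
  also have "(\<Sum>k\<in>{..Suc n} - {j}. h k) = (\<Sum>i\<le>n. h (sk j i))"
    using sum.reindex_bij_betw[OF sk_bij[OF assms], of h] by simp
  finally show ?thesis .
qed

lemma omit_sk: "omit j a i = a (sk j i)"
  by (simp add: omit_def sk_def)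

lemma det_kernel:
  fixes a :: "nat \<Rightarrow> nat \<Rightarrow> complex"
  assumes i: "i \<le> n"
  shows "(\<Sum>j\<le>Suc n. ((-1)^j * Determinant.det (mat (Suc n) (Suc n) (\<lambda>(r, s). omit j a s r))) * a j i) = 0"
proof -
  define B where "B = (mat (Suc (Suc n)) (Suc (Suc n)) (\<lambda>(r,s). if r = 0 then a s i else a s (r - 1)) :: complex mat)"
  have Bc: "B \<in> carrier_mat (Suc (Suc n)) (Suc (Suc n))" by (simp add: B_def)
  have "Determinant.det B = 0"
    by (rule det_identical_rows[OF Bc, of 0 "Suc i"]) (use i in \<open>auto simp: B_def intro!: eq_vecI\<close>)
  moreover have "Determinant.det B = (\<Sum>s<Suc (Suc n). B $$ (0,s) * cofactor B 0 s)"
    by (rule laplace_expansion_row[OF Bc]) simp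
  moreover have "(\<Sum>s<Suc (Suc n). B $$ (0,s) * cofactor B 0 s)
     = (\<Sum>s\<le>Suc n. ((-1)^s * Determinant.det (mat (Suc n) (Suc n) (\<lambda>(r, s'). omit s a s' r))) * a s i)"
  proof (rule sum.cong)
    show "{..<Suc (Suc n)} = {..Suc n}" by auto
    fix s assume s: "s \<in> {..Suc n}"
    have "mat_delete B 0 s = mat (Suc n) (Suc n) (\<lambda>(r, s'). omit s a s' r)"
      by (rule eq_matI) (auto simp: mat_delete_def B_def omit_def)
    thus "B $$ (0,s) * cofactor B 0 s = ((-1)^s * Determinant.det (mat (Suc n) (Suc n) (\<lambda>(r, s'). omit s a s' r))) * a s i"
      using s by (simp add: cofactor_def B_def)
  qed
  ultimately show ?thesis by simp
qed




theorem lemma2: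
  fixes n :: nat and a :: "nat \<Rightarrow> nat \<Rightarrow> complex"
  assumes "\<And>j. j \<le> Suc n \<Longrightarrow> a j \<in> Qset n"
    and "\<And>j k. j \<le> Suc n \<Longrightarrow> k \<le> Suc n \<Longrightarrow> cmod (bf n (a j) (a k) - 1) < 1"
  shows "(\<Sum>j\<le>Suc n. (-1) ^ j * Fint n (omit j a)) = 0"
proof -
  define N where "N = Suc n"
  define g where "g = (\<lambda>k l. bf n (a k) (a l))"
  define D where "D = (\<lambda>j. Determinant.det (mat (Suc n) (Suc n) (\<lambda>(i, k). omit j a k i)))"
  define c where "c = (\<lambda>j. (-1)^j * D j)"
  define RS where "RS = (\<lambda>(k,l). Re (g k l)) ` ({..N} \<times> {..N})"
  define m where "m = Min RS"
  have Rpos: "0 < Re (g k l)" if "k \<le> N" "l \<le> N" for k l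
  proof -
    have "cmod (g k l - 1) < 1" using assms(2) that by (simp add: g_def N_def)
    moreover have "\<bar>Re (g k l - 1)\<bar> \<le> cmod (g k l - 1)" by (rule abs_Re_le_cmod)
    ultimately show ?thesis by simp
  qed
  have finRS: "finite RS" "RS \<noteq> {}" by (auto simp: RS_def)
  have mpos: "0 < m" unfolding m_def using finRS Rpos by (subst Min_gr_iff) (auto simp: RS_def)
  have mle: "m \<le> Re (g k l)" if "k \<le> N" "l \<le> N" for k l
    unfolding m_def using that finRS by (intro Min_le) (auto simp: RS_def)
  have gsym: "g k l = g l k" for k l by (simp add: g_def bf_def mult.commute)
  have ker: "(\<Sum>j\<le>N. c j * g j l) = 0" if "l \<le> N" for l
  proof -
    have "(\<Sum>j\<le>N. c j * g j l) = (\<Sum>j\<le>N. \<Sum>i\<le>n. c j * a j i * a l i)"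
      by (simp add: g_def bf_def sum_distrib_left mult.assoc)
    also have "\<dots> = (\<Sum>i\<le>n. \<Sum>j\<le>N. c j * a j i * a l i)" by (rule sum.swap)
    also have "\<dots> = (\<Sum>i\<le>n. (\<Sum>j\<le>N. c j * a j i) * a l i)" by (simp add: sum_distrib_right)
    also have "\<dots> = 0" using det_kernel[of _ n a] by (simp add: c_def D_def N_def)
    finally show ?thesis .
  qed
  interpret divsetup N g c m
    using gsym mpos mle ker by unfold_locales auto
  have F: "Fint n (omit j a) = D j * (\<integral>x. indicator (Oc ({..N}-{j})) x *\<^sub>R ff (x(j:=0)) \<partial>PM ({..N}-{j}))"
    if j: "j \<le> N" for j
  proof -
    define h where "h = (\<lambda>t. indicator (PiE {..n} (\<lambda>_. {0..})) t *\<^sub>R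
       exp (- (\<Sum>i\<le>n. \<Sum>k\<le>n. bf n (omit j a i) (omit j a k) * complex_of_real (t i * t k))) :: complex)"
    have jn: "j \<le> Suc n" using j by (simp add: N_def)
    have hm: "h \<in> borel_measurable (PM {..n})"
      unfolding h_def by (intro borel_measurable_scaleR borel_measurable_indicator sets_PiM_I_finite) (auto, measurable)
    have "Fint n (omit j a) = D j * integral\<^sup>L (PM {..n}) h"
      by (simp add: Fint_def D_def h_def set_lebesgue_integral_def)
    also have "integral\<^sup>L (PM {..n}) h = (\<integral>x. h (\<lambda>i\<in>{..n}. x (sk j i)) \<partial>PM ({..Suc n}-{j}))"
      by (rule integral_reindex[OF sk_bij[OF jn] _ hm]) simp
    also have "\<dots> = (\<integral>x. indicator (Oc ({..N}-{j})) x *\<^sub>R ff (x(j:=0)) \<partial>PM ({..N}-{j}))"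
    proof (rule Bochner_Integration.integral_cong)
      show "PM ({..Suc n}-{j}) = PM ({..N}-{j})" by (simp add: N_def)
      fix x assume "x \<in> space (PM ({..N}-{j}))"
      hence xe: "x \<in> extensional ({..N}-{j})" by (simp add: space_PiM PiE_def)
      have ind: "((\<lambda>i\<in>{..n}. x (sk j i)) \<in> PiE {..n} (\<lambda>_. {0..})) \<longleftrightarrow> x \<in> Oc ({..N}-{j})"
      proof
        assume H: "(\<lambda>i\<in>{..n}. x (sk j i)) \<in> PiE {..n} (\<lambda>_. {0..})"
        have "0 \<le> x k" if k: "k \<in> {..N}-{j}" for k
        proof -
          obtain i where "i \<le> n" "k = sk j i" using k sk_bij[OF jn] by (auto simp: bij_betw_def N_def)
          thus ?thesis using H by (auto simp: PiE_def Pi_iff)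
        qed
        thus "x \<in> Oc ({..N}-{j})" using xe by (auto simp: Oc_def PiE_def Pi_iff)
      next
        assume H: "x \<in> Oc ({..N}-{j})"
        have "sk j i \<in> {..N}-{j}" if "i \<le> n" for i
          using sk_bij[OF jn] that by (auto simp: bij_betw_def N_def)
        thus "(\<lambda>i\<in>{..n}. x (sk j i)) \<in> PiE {..n} (\<lambda>_. {0..})"
          using H by (auto simp: Oc_def PiE_def Pi_iff)
      qed
      have q: "Qf (x(j:=0)) = (\<Sum>i\<le>n. \<Sum>k\<le>n. bf n (omit j a i) (omit j a k) *
                 complex_of_real ((\<lambda>i\<in>{..n}. x (sk j i)) i * (\<lambda>i\<in>{..n}. x (sk j i)) k))"
      proof -
        have "Qf (x(j:=0)) = (\<Sum>i\<le>n. \<Sum>l\<le>Suc n. g (sk j i) l * complex_of_real ((x(j:=0)) (sk j i) * (x(j:=0)) l))"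
          unfolding Qf_def by (simp only: N_def, subst sum_split_sk[OF jn]) simp
        also have "\<dots> = (\<Sum>i\<le>n. \<Sum>k\<le>n. g (sk j i) (sk j k) * complex_of_real ((x(j:=0)) (sk j i) * (x(j:=0)) (sk j k)))"
          by (rule sum.cong[OF refl], subst sum_split_sk[OF jn], simp)
        also have "\<dots> = (\<Sum>i\<le>n. \<Sum>k\<le>n. bf n (omit j a i) (omit j a k) *
                 complex_of_real ((\<lambda>i\<in>{..n}. x (sk j i)) i * (\<lambda>i\<in>{..n}. x (sk j i)) k))"
          by (intro sum.cong refl) (auto simp: g_def omit_sk sk_def)
        finally show ?thesis .
      qed
      show "h (\<lambda>i\<in>{..n}. x (sk j i)) = indicator (Oc ({..N}-{j})) x *\<^sub>R ff (x(j:=0))"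
        unfolding h_def ff_def q using ind by (simp add: indicator_def)
    qed
    finally show ?thesis .
  qed
  have "(\<Sum>j\<le>Suc n. (-1) ^ j * Fint n (omit j a))
      = (\<Sum>j\<le>N. c j * (\<integral>x. indicator (Oc ({..N}-{j})) x *\<^sub>R ff (x(j:=0)) \<partial>PM ({..N}-{j})))"
    by (intro sum.cong) (auto simp: F c_def N_def mult.assoc)
  also have "\<dots> = 0" by (rule stepC)
  finally show ?thesis .
qed


end
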